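(* For every $t\in[0,1)$, the generalized Cesàro operator $C_t: VH(\mathbb D)\to VH(\mathbb D)$ is compact.
   Context: $\mathbb D$ is the open unit disc. Define $v(z)=1$ if $|z|\le 1-1/e$ and $v(z)=(-\log(1-|z|))^{-1}$ if $1-1/e\le|z|<1$, $v_k=v^k$, $H^\infty_{v_k}=\{f \text{ analytic on }\mathbb D:\sup_{z\in\mathbb D}v_k(z)|f(z)|<\infty\}$ normed by this sup, and $VH(\mathbb D)=\bigcup_kH^\infty_{v_k}$ with the finest locally convex topology making all inclusions continuous. For $t\in[0,1]$, $C_tf(z)=\frac1z\int_0^z\frac{f(\zeta)}{1-t\zeta}\,d\zeta$ for $z\neq0$ and $C_tf(0)=f(0)$. A linear operator $T$ on a locally convex space $X$ is compact if there exists a $0$-neighbourhood $U$ in $X$ with $T(U)$ relatively compact in $X$. *)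

theory Defs
  imports "HOL-Complex_Analysis.Complex_Analysis"
begin

text \<open>Functions on the disc are represented as functions complex => complex that
  vanish outside the open unit disc (so each analytic function on D has exactly
  one representative).\<close>

definition vw :: "complex \<Rightarrow> real" where
  "vw z = (if norm z \<le> 1 - 1 / exp 1 then 1 else 1 / (- ln (1 - norm z)))"

definition Hv :: "nat \<Rightarrow> (complex \<Rightarrow> complex) set" where
  "Hv k = {f. f holomorphic_on ball 0 1 \<and> (\<forall>z. z \<notin> ball 0 1 \<longrightarrow> f z = 0)
              \<and> (\<exists>C. \<forall>z\<in>ball 0 1. vw z ^ k * norm (f z) \<le> C)}"

definition vnorm :: "nat \<Rightarrow> (complex \<Rightarrow> complex) \<Rightarrow> real" where
  "vnorm k f = (SUP z\<in>ball 0 1. vw z ^ k * norm (f z))"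

definition VH :: "(complex \<Rightarrow> complex) set" where
  "VH = (\<Union>k. Hv k)"

text \<open>Basic 0-neighbourhoods of the inductive limit topology: absolutely convex
  subsets of VH whose trace on every step H_{v_k} contains a norm ball.\<close>
definition VH_basic_nbhd :: "(complex \<Rightarrow> complex) set \<Rightarrow> bool" where
  "VH_basic_nbhd W \<longleftrightarrow> W \<subseteq> VH
     \<and> (\<forall>f\<in>W. \<forall>g\<in>W. \<forall>a b :: complex. norm a + norm b \<le> 1 \<longrightarrow> (\<lambda>z. a * f z + b * g z) \<in> W)
     \<and> (\<forall>k. \<exists>\<epsilon>>0. {f \<in> Hv k. vnorm k f < \<epsilon>} \<subseteq> W)"

definition VH_top :: "(complex \<Rightarrow> complex) topology" where
  "VH_top = topology (\<lambda>S. S \<subseteq> VH \<and>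
      (\<forall>f\<in>S. \<exists>W. VH_basic_nbhd W \<and> (\<lambda>g z. f z + g z) ` W \<subseteq> S))"

definition VH_zero_nbhd :: "(complex \<Rightarrow> complex) set \<Rightarrow> bool" where
  "VH_zero_nbhd U \<longleftrightarrow> U \<subseteq> VH \<and> (\<exists>W. VH_basic_nbhd W \<and> W \<subseteq> U)"

definition VH_compact_op :: "((complex \<Rightarrow> complex) \<Rightarrow> (complex \<Rightarrow> complex)) \<Rightarrow> bool" where
  "VH_compact_op T \<longleftrightarrow> (\<exists>U. VH_zero_nbhd U \<and> T ` U \<subseteq> VH
       \<and> compactin VH_top (VH_top closure_of (T ` U)))"

definition Cesaro_t :: "real \<Rightarrow> (complex \<Rightarrow> complex) \<Rightarrow> (complex \<Rightarrow> complex)" where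
  "Cesaro_t t f z = (if z \<notin> ball 0 1 then 0
      else if z = 0 then f 0
      else (1 / z) * contour_integral (linepath 0 z) (\<lambda>\<zeta>. f \<zeta> / (1 - of_real t * \<zeta>)))"

end

theory Submission
  imports Defs
begin

lemma vw_big:
  assumes "norm z < 1" "\<not> norm z \<le> 1 - 1 / exp 1"
  shows "vw z = 1 / (- ln (1 - norm z))" "- ln (1 - norm z) > 1"
proof -
  have "1 - norm z < 1 / exp 1" using assms by simp
  then have "ln (1 - norm z) < ln (1 / exp 1)" using assms
    by (intro ln_less_cancel_iff[THEN iffD2]) auto
  then show "- ln (1 - norm z) > 1" by (simp add: ln_div)
  show "vw z = 1 / (- ln (1 - norm z))" using assms by (simp add: vw_def)
qed

lemma vw_pos: "norm z < 1 \<Longrightarrow> 0 < vw z"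
  by (cases "norm z \<le> 1 - 1 / exp 1") (auto simp: vw_def dest: vw_big)

lemma vw_le1: "norm z < 1 \<Longrightarrow> vw z \<le> 1"
proof (cases "norm z \<le> 1 - 1 / exp 1")
  case False
  assume "norm z < 1"
  note h = vw_big[OF this False]
  have "1 / (- ln (1 - norm z)) \<le> 1" using h(2) by (simp only: divide_le_eq_1) simp
  then show ?thesis using h(1) by simp
qed (simp add: vw_def)

lemma vw_0: "vw 0 = 1"
  by (simp add: vw_def)


lemma Hv_mono: assumes "k \<le> m" shows "Hv k \<subseteq> Hv m"
proof
  fix f assume "f \<in> Hv k"
  then obtain C where f: "f holomorphic_on ball 0 1" "\<forall>z. z \<notin> ball 0 1 \<longrightarrow> f z = 0"
     and C: "\<forall>z\<in>ball 0 1. vw z ^ k * norm (f z) \<le> C" by (auto simp: Hv_def)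
  have "\<forall>z\<in>ball 0 1. vw z ^ m * norm (f z) \<le> C"
  proof
    fix z :: complex assume z: "z \<in> ball 0 1"
    then have "norm z < 1" by simp
    then have "vw z ^ m \<le> vw z ^ k" using vw_pos[of z] vw_le1[of z] assms
      by (intro power_decreasing) auto
    then have "vw z ^ m * norm (f z) \<le> vw z ^ k * norm (f z)"
      by (simp add: mult_right_mono)
    then show "vw z ^ m * norm (f z) \<le> C" using C z by force
  qed
  then show "f \<in> Hv m" using f by (auto simp: Hv_def)
qed

lemma Hv_lin:
  assumes "f \<in> Hv k" "g \<in> Hv k"
  shows "(\<lambda>z. a * f z + b * g z) \<in> Hv k"
proof -
  obtain C where f: "f holomorphic_on ball 0 1" "\<forall>z. z \<notin> ball 0 1 \<longrightarrow> f z = 0"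
     and C: "\<forall>z\<in>ball 0 1. vw z ^ k * norm (f z) \<le> C" using assms by (auto simp: Hv_def)
  obtain D where g: "g holomorphic_on ball 0 1" "\<forall>z. z \<notin> ball 0 1 \<longrightarrow> g z = 0"
     and D: "\<forall>z\<in>ball 0 1. vw z ^ k * norm (g z) \<le> D" using assms by (auto simp: Hv_def)
  have "\<forall>z\<in>ball 0 1. vw z ^ k * norm (a * f z + b * g z) \<le> norm a * C + norm b * D"
  proof
    fix z :: complex assume z: "z \<in> ball 0 1"
    then have vp: "0 \<le> vw z ^ k" using vw_pos[of z] by simp
    have "vw z ^ k * norm (a * f z + b * g z) \<le> vw z ^ k * (norm a * norm (f z) + norm b * norm (g z))"
      using vp by (intro mult_left_mono) (auto intro: order.trans[OF norm_triangle_ineq] simp: norm_mult)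
    also have "\<dots> = norm a * (vw z ^ k * norm (f z)) + norm b * (vw z ^ k * norm (g z))"
      by (simp add: algebra_simps)
    also have "\<dots> \<le> norm a * C + norm b * D"
      using C D z by (intro add_mono mult_left_mono) auto
    finally show "vw z ^ k * norm (a * f z + b * g z) \<le> norm a * C + norm b * D" .
  qed
  moreover have "(\<lambda>z. a * f z + b * g z) holomorphic_on ball 0 1"
    using f g by (intro holomorphic_intros)
  ultimately show ?thesis using f g by (auto simp: Hv_def)
qed

lemma VH_lin:
  assumes "f \<in> VH" "g \<in> VH"
  shows "(\<lambda>z. a * f z + b * g z) \<in> VH"
proof -
  obtain k m where "f \<in> Hv k" "g \<in> Hv m" using assms by (auto simp: VH_def)
  then have "f \<in> Hv (max k m)" "g \<in> Hv (max k m)" using Hv_mono[of k "max k m"] Hv_mono[of m "max k m"] by auto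
  then show ?thesis using Hv_lin unfolding VH_def by blast
qed

lemma VH_add:
  assumes "f \<in> VH" "g \<in> VH"
  shows "(\<lambda>z. f z + g z) \<in> VH"
  using VH_lin[OF assms, of 1 1] by simp

lemma vnorm_upper:
  assumes "f \<in> Hv k" "z \<in> ball 0 1"
  shows "vw z ^ k * norm (f z) \<le> vnorm k f"
proof -
  obtain C where C: "\<forall>z\<in>ball 0 1. vw z ^ k * norm (f z) \<le> C" using assms by (auto simp: Hv_def)
  show ?thesis unfolding vnorm_def
    by (rule cSUP_upper[OF assms(2)]) (use C in \<open>auto intro!: bdd_aboveI2\<close>)
qed

lemma vnorm_nonneg: assumes "f \<in> Hv k" shows "0 \<le> vnorm k f"
proof -
  have "0 \<le> vw 0 ^ k * norm (f 0)" by (simp add: vw_0)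
  also have "\<dots> \<le> vnorm k f" by (rule vnorm_upper[OF assms]) simp
  finally show ?thesis .
qed

lemma Hv_holo: "f \<in> Hv k \<Longrightarrow> f holomorphic_on ball 0 1"
  by (simp add: Hv_def)
lemma Hv_out: "f \<in> Hv k \<Longrightarrow> z \<notin> ball 0 1 \<Longrightarrow> f z = 0"
  by (simp add: Hv_def)


definition openP :: "(complex \<Rightarrow> complex) set \<Rightarrow> bool" where
  "openP S \<longleftrightarrow> S \<subseteq> VH \<and> (\<forall>f\<in>S. \<exists>W. VH_basic_nbhd W \<and> (\<lambda>g z. f z + g z) ` W \<subseteq> S)"

lemma basic_Int:
  assumes "VH_basic_nbhd W1" "VH_basic_nbhd W2"
  shows "VH_basic_nbhd (W1 \<inter> W2)"
  unfolding VH_basic_nbhd_def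
proof (intro conjI allI)
  show "W1 \<inter> W2 \<subseteq> VH" using assms by (auto simp: VH_basic_nbhd_def)
  show "\<forall>f\<in>W1 \<inter> W2. \<forall>g\<in>W1 \<inter> W2. \<forall>a b. cmod a + cmod b \<le> 1 \<longrightarrow> (\<lambda>z. a * f z + b * g z) \<in> W1 \<inter> W2"
    using assms unfolding VH_basic_nbhd_def by blast
  fix k
  obtain e1 where "e1 > 0" "{f \<in> Hv k. vnorm k f < e1} \<subseteq> W1" using assms(1) unfolding VH_basic_nbhd_def by blast
  moreover obtain e2 where "e2 > 0" "{f \<in> Hv k. vnorm k f < e2} \<subseteq> W2" using assms(2) unfolding VH_basic_nbhd_def by blast
  ultimately show "\<exists>\<epsilon>>0. {f \<in> Hv k. vnorm k f < \<epsilon>} \<subseteq> W1 \<inter> W2"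
    by (intro exI[of _ "min e1 e2"]) auto
qed

lemma istopology_openP: "istopology openP"
  unfolding istopology_def
proof (intro conjI allI impI)
  fix S T assume S: "openP S" and T: "openP T"
  show "openP (S \<inter> T)" unfolding openP_def
  proof (intro conjI ballI)
    show "S \<inter> T \<subseteq> VH" using S by (auto simp: openP_def)
    fix f assume "f \<in> S \<inter> T"
    then obtain W1 W2 where "VH_basic_nbhd W1" "(\<lambda>g z. f z + g z) ` W1 \<subseteq> S"
       "VH_basic_nbhd W2" "(\<lambda>g z. f z + g z) ` W2 \<subseteq> T" using S T unfolding openP_def by (meson IntD1 IntD2)
    then show "\<exists>W. VH_basic_nbhd W \<and> (\<lambda>g z. f z + g z) ` W \<subseteq> S \<inter> T"
      by (intro exI[of _ "W1 \<inter> W2"]) (auto simp: basic_Int)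
  qed
next
  fix K assume K: "\<forall>S\<in>K. openP S"
  show "openP (\<Union> K)" unfolding openP_def
  proof (intro conjI ballI)
    show "\<Union> K \<subseteq> VH" using K by (auto simp: openP_def)
    fix f assume "f \<in> \<Union> K"
    then obtain S where "S \<in> K" "f \<in> S" by auto
    then obtain W where "VH_basic_nbhd W" "(\<lambda>g z. f z + g z) ` W \<subseteq> S" using K unfolding openP_def by meson
    then show "\<exists>W. VH_basic_nbhd W \<and> (\<lambda>g z. f z + g z) ` W \<subseteq> \<Union> K" using \<open>S \<in> K\<close> by blast
  qed
qed

lemma openin_VH_top: "openin VH_top = openP"
proof -
  have "openP = (\<lambda>S. S \<subseteq> VH \<and> (\<forall>f\<in>S. \<exists>W. VH_basic_nbhd W \<and> (\<lambda>g z. f z + g z) ` W \<subseteq> S))"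
    by (rule ext) (simp add: openP_def)
  then show ?thesis unfolding VH_top_def using istopology_openP by simp
qed

lemma VH_basic: "VH_basic_nbhd VH"
  unfolding VH_basic_nbhd_def
proof (intro conjI allI ballI impI)
  fix f g a b assume "f \<in> VH" "g \<in> VH"
  then show "(\<lambda>z. a * f z + b * g z) \<in> VH" by (rule VH_lin)
next
  fix k show "\<exists>\<epsilon>>0. {f \<in> Hv k. vnorm k f < \<epsilon>} \<subseteq> VH"
    by (intro exI[of _ 1]) (auto simp: VH_def)
qed auto

lemma openP_VH: "openP VH"
  unfolding openP_def using VH_basic VH_add by blast

lemma topspace_VH_top: "topspace VH_top = VH"
proof
  show "topspace VH_top \<subseteq> VH" unfolding topspace_def openin_VH_top openP_def by auto
  show "VH \<subseteq> topspace VH_top" using openP_VH openin_VH_top openin_subset by metis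
qed


lemma denom_nz:
  assumes "0 \<le> t" "t < 1" "w \<in> ball (0::complex) 1"
  shows "1 - of_real t * w \<noteq> 0"
proof -
  have "norm (of_real t * w) = t * norm w" using assms by (simp add: norm_mult)
  also have "\<dots> \<le> norm w" using assms by (intro mult_left_le_one_le) auto
  also have "\<dots> < 1" using assms by simp
  finally show ?thesis by auto
qed

lemma h_holo:
  assumes "f holomorphic_on ball 0 1" "0 \<le> t" "t < 1"
  shows "(\<lambda>w. f w / (1 - of_real t * w)) holomorphic_on ball 0 1"
proof (rule holomorphic_on_divide)
  show "f holomorphic_on ball 0 1" by fact
  show "(\<lambda>w. 1 - complex_of_real t * w) holomorphic_on ball 0 1"
    by (intro holomorphic_on_diff holomorphic_on_const holomorphic_on_mult holomorphic_on_ident)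
  show "\<And>z. z \<in> ball 0 1 \<Longrightarrow> 1 - complex_of_real t * z \<noteq> 0"
    using denom_nz[OF assms(2,3)] by blast
qed

lemma primitive_deriv:
  assumes h: "h holomorphic_on ball 0 1" and x: "x \<in> ball (0::complex) 1"
  shows "((\<lambda>x. contour_integral (linepath 0 x) h) has_field_derivative h x) (at x)"
proof -
  have "((\<lambda>x. contour_integral (linepath 0 x) h) has_field_derivative h x) (at x within ball 0 1)"
  proof (rule triangle_contour_integrals_convex_primitive)
    show "continuous_on (ball 0 1) h" using h by (rule holomorphic_on_imp_continuous_on)
    fix b c assume "b \<in> ball (0::complex) 1" "c \<in> ball (0::complex) 1"
    then have "convex hull {0, b, c} \<subseteq> ball 0 1"
      by (intro hull_minimal) auto
    then have "(h has_contour_integral 0) (linepath 0 b +++ linepath b c +++ linepath c 0)"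
      by (intro Cauchy_theorem_triangle holomorphic_on_subset[OF h])
    then show "contour_integral (linepath 0 b) h + contour_integral (linepath b c) h + contour_integral (linepath c 0) h = 0"
      by (rule has_chain_integral_chain_integral3)
  next
    show "0 \<in> ball (0::complex) 1" by simp
  next
    show "x \<in> ball 0 1" using x .
  qed (rule convex_ball)
  moreover have "at x within ball 0 1 = at x" using x by (intro at_within_open) auto
  ultimately show ?thesis by simp
qed


lemma cesaro_holo:
  assumes f: "f holomorphic_on ball 0 1" and t: "0 \<le> t" "t < 1"
  shows "Cesaro_t t f holomorphic_on ball 0 1"
proof -
  define h where "h = (\<lambda>w. f w / (1 - of_real t * w))"
  have hh: "h holomorphic_on ball 0 1" unfolding h_def by (rule h_holo[OF f t])
  define F where "F = (\<lambda>x. contour_integral (linepath 0 x) h)"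
  have dF: "\<And>x. x \<in> ball 0 1 \<Longrightarrow> (F has_field_derivative h x) (at x)"
    unfolding F_def by (rule primitive_deriv[OF hh])
  have Fh: "F holomorphic_on ball 0 1"
    unfolding holomorphic_on_open[OF open_ball] using dF by blast
  have G: "(\<lambda>z. if z = 0 then deriv F 0 else (F z - F 0) / (z - 0)) holomorphic_on ball 0 1"
    by (rule pole_lemma[OF Fh]) (simp add: interior_open)
  have F0: "F 0 = 0" by (simp add: F_def)
  have dF0: "deriv F 0 = f 0" using DERIV_imp_deriv[OF dF[of 0]] by (simp add: h_def)
  show ?thesis
  proof (rule holomorphic_transform[OF G])
    fix z :: complex assume "z \<in> ball 0 1"
    then show "(if z = 0 then deriv F 0 else (F z - F 0) / (z - 0)) = Cesaro_t t f z"
      by (cases "z = 0") (simp_all add: Cesaro_t_def F0 dF0, simp add: F_def h_def)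
  qed
qed

lemma cesaro_out: "z \<notin> ball 0 1 \<Longrightarrow> Cesaro_t t f z = 0"
  by (simp add: Cesaro_t_def)

lemma cesaro_lin:
  assumes f: "f holomorphic_on ball 0 1" and g: "g holomorphic_on ball 0 1"
    and t: "0 \<le> t" "t < 1" and z: "z \<in> ball 0 1"
  shows "Cesaro_t t (\<lambda>w. a * f w + b * g w) z = a * Cesaro_t t f z + b * Cesaro_t t g z"
proof (cases "z = 0")
  case False
  define hf where "hf = (\<lambda>w. f w / (1 - of_real t * w))"
  define hg where "hg = (\<lambda>w. g w / (1 - of_real t * w))"
  have seg: "closed_segment 0 z \<subseteq> ball 0 1"
    using z by (intro closed_segment_subset) auto
  have "hf contour_integrable_on linepath 0 z"
    unfolding hf_def
    by (intro contour_integrable_continuous_linepath continuous_on_subset[OF _ seg]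
        holomorphic_on_imp_continuous_on h_holo f t)
  then have i1: "(hf has_contour_integral contour_integral (linepath 0 z) hf) (linepath 0 z)"
    by (rule has_contour_integral_integral)
  have "hg contour_integrable_on linepath 0 z"
    unfolding hg_def
    by (intro contour_integrable_continuous_linepath continuous_on_subset[OF _ seg]
        holomorphic_on_imp_continuous_on h_holo g t)
  then have i2: "(hg has_contour_integral contour_integral (linepath 0 z) hg) (linepath 0 z)"
    by (rule has_contour_integral_integral)
  have "((\<lambda>w. a * hf w + b * hg w) has_contour_integral
      (a * contour_integral (linepath 0 z) hf + b * contour_integral (linepath 0 z) hg)) (linepath 0 z)"
    by (intro has_contour_integral_add has_contour_integral_lmul i1 i2)
  moreover have "(\<lambda>w. a * hf w + b * hg w) = (\<lambda>w. (a * f w + b * g w) / (1 - of_real t * w))"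
    by (auto simp: hf_def hg_def add_divide_distrib)
  ultimately have "contour_integral (linepath 0 z) (\<lambda>w. (a * f w + b * g w) / (1 - of_real t * w))
     = a * contour_integral (linepath 0 z) hf + b * contour_integral (linepath 0 z) hg"
    using contour_integral_unique by metis
  then show ?thesis using False z by (simp add: Cesaro_t_def hf_def hg_def algebra_simps)
qed (use z in \<open>simp add: Cesaro_t_def\<close>)


lemma log_bound:
  fixes x :: real
  assumes "0 < x" "x \<le> 1"
  shows "sqrt x * (1 - ln x) ^ k \<le> (2 * real k + 1) ^ k"
proof -
  define y where "y = - ln x"
  have y0: "0 \<le> y" using assms by (simp add: y_def)
  define c where "c = 2 * real k + 1"
  have c1: "1 \<le> c" by (simp add: c_def)
  have "(1 + y) / c \<le> 1 + y / c" using c1 y0 by (simp add: divide_simps)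
  also have "\<dots> \<le> exp (y / c)" by (rule exp_ge_add_one_self)
  finally have "((1 + y) / c) ^ k \<le> exp (y / c) ^ k"
    using c1 y0 by (intro power_mono) auto
  also have "\<dots> = exp (real k * y / c)" by (simp add: exp_of_nat_mult[symmetric])
  also have "\<dots> \<le> exp (y / 2)"
  proof -
    have "real k * y / c \<le> y / 2"
      using y0 c1 by (simp add: c_def divide_simps) (simp add: mult_right_mono algebra_simps)
    then show ?thesis by simp
  qed
  finally have "(1 + y) ^ k \<le> c ^ k * exp (y / 2)"
    using c1 by (simp add: power_divide divide_le_eq mult.commute)
  moreover have "sqrt x = exp (- y / 2)"
  proof -
    have "sqrt x = exp (ln (sqrt x))" using assms by simp
    also have "ln (sqrt x) = ln x / 2" using assms by (intro ln_sqrt) simp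
    finally show ?thesis by (simp add: y_def)
  qed
  ultimately have "sqrt x * (1 + y) ^ k \<le> exp (- y / 2) * (c ^ k * exp (y / 2))"
    by (simp add: mult_left_mono)
  also have "\<dots> = c ^ k" by (simp add: exp_minus field_simps)
  finally show ?thesis by (simp add: y_def c_def)
qed

lemma inv_vw_bound:
  assumes "norm w < 1"
  shows "1 \<le> vw w * (1 - ln (1 - norm w))"
proof (cases "norm w \<le> 1 - 1 / exp 1")
  case True
  have "ln (1 - norm w) \<le> 0" using assms by simp
  then show ?thesis using True by (simp add: vw_def)
next
  case False
  note h = vw_big[OF assms False]
  define L where "L = - ln (1 - norm w)"
  have "L > 1" using h(2) by (simp add: L_def)
  have "vw w * (1 - ln (1 - norm w)) = (1 + L) / L" using h(1) by (simp add: L_def)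
  also have "\<dots> \<ge> 1" using \<open>L > 1\<close> by (simp add: divide_simps)
  finally show ?thesis .
qed

lemma f_pt_bound:
  assumes f: "f \<in> Hv k" and w: "w \<in> ball 0 1"
  shows "norm (f w) * sqrt (1 - norm w) \<le> vnorm k f * (2 * real k + 1) ^ k"
proof -
  have w1: "norm w < 1" using w by simp
  define L where "L = 1 - ln (1 - norm w)"
  have "ln (1 - norm w) \<le> 0" using w1 by simp
  then have L0: "0 \<le> L" by (simp add: L_def)
  have vL: "1 \<le> vw w * L" using inv_vw_bound[OF w1] by (simp add: L_def)
  have vp: "0 < vw w" using vw_pos[OF w1] .
  have "norm (f w) \<le> norm (f w) * (vw w * L) ^ k"
    using vL by (simp add: one_le_power mult_le_cancel_left1)
  also have "\<dots> = (vw w ^ k * norm (f w)) * L ^ k" by (simp add: power_mult_distrib)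
  also have "\<dots> \<le> vnorm k f * L ^ k"
    using vnorm_upper[OF f w] L0 by (simp add: mult_right_mono)
  finally have a: "norm (f w) \<le> vnorm k f * L ^ k" .
  have b: "sqrt (1 - norm w) * L ^ k \<le> (2 * real k + 1) ^ k"
    unfolding L_def using w1 by (intro log_bound) auto
  have "norm (f w) * sqrt (1 - norm w) \<le> vnorm k f * L ^ k * sqrt (1 - norm w)"
    using a w1 by (simp add: mult_right_mono)
  also have "\<dots> = vnorm k f * (sqrt (1 - norm w) * L ^ k)" by simp
  also have "\<dots> \<le> vnorm k f * (2 * real k + 1) ^ k"
    using b vnorm_nonneg[OF f] by (simp add: mult_left_mono)
  finally show ?thesis .
qed

lemma sqrt_integral:
  fixes r :: real
  assumes "0 < r" "r < 1"
  shows "((\<lambda>s. 1 / sqrt (1 - s * r)) has_integral (2 / r * (1 - sqrt (1 - r)))) {0..1}"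
proof -
  have "((\<lambda>s. 1 / sqrt (1 - s * r)) has_integral ((\<lambda>s. - (2 / r) * sqrt (1 - s * r)) 1 - (\<lambda>s. - (2 / r) * sqrt (1 - s * r)) 0)) {0..1}"
  proof (rule fundamental_theorem_of_calculus)
    fix s :: real assume s: "s \<in> {0..1}"
    have pos: "0 < 1 - s * r"
    proof -
      have "s * r \<le> r" using s assms by (intro mult_left_le_one_le) auto
      then show ?thesis using assms by linarith
    qed
    have d1: "((\<lambda>s. 1 - s * r) has_real_derivative (- r)) (at s within {0..1})"
      by (intro derivative_eq_intros) auto
    have d2: "(sqrt has_real_derivative inverse (sqrt (1 - s * r)) / 2) (at (1 - s * r))"
      by (rule DERIV_real_sqrt) (use pos in auto)
    have "((\<lambda>s. - (2 / r) * sqrt (1 - s * r)) has_real_derivative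
          (- (2 / r) * (inverse (sqrt (1 - s * r)) / 2 * (- r)))) (at s within {0..1})"
      by (rule DERIV_cmult[OF DERIV_chain2[OF d2 d1]])
    moreover have "- (2 / r) * (inverse (sqrt (1 - s * r)) / 2 * (- r)) = 1 / sqrt (1 - s * r)"
      using assms by (simp add: field_simps)
    ultimately show "((\<lambda>s. - (2 / r) * sqrt (1 - s * r)) has_vector_derivative 1 / sqrt (1 - s * r)) (at s within {0..1})"
      by (simp add: has_real_derivative_iff_has_vector_derivative)
  qed simp
  then show ?thesis by (simp add: algebra_simps)
qed


lemma segment_bound:
  assumes h: "continuous_on (ball 0 1) h"
    and A: "\<forall>w\<in>ball 0 1. norm (h w) * sqrt (1 - norm w) \<le> A"
    and z: "z \<in> ball 0 1" "z \<noteq> 0"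
  shows "norm (contour_integral (linepath 0 z) h) \<le> 2 * A * norm z"
proof -
  define r where "r = norm z"
  have r: "0 < r" "r < 1" using z by (auto simp: r_def)
  have A0: "0 \<le> A" using A[rule_format, of 0] by simp (meson norm_ge_zero order_trans)
  have seg: "closed_segment 0 z \<subseteq> ball 0 1"
    using z by (intro closed_segment_subset) auto
  have "h contour_integrable_on linepath 0 z"
    by (intro contour_integrable_continuous_linepath continuous_on_subset[OF h seg])
  then obtain I where I: "(h has_contour_integral I) (linepath 0 z)"
    by (auto simp: contour_integrable_on_def)
  then have ci: "contour_integral (linepath 0 z) h = I" by (rule contour_integral_unique)
  have I2: "((\<lambda>s. h (linepath 0 z s) * z) has_integral I) {0..1}"
    using I by (simp add: has_contour_integral_linepath)
  have G: "((\<lambda>s. (A * r) * (1 / sqrt (1 - s * r))) has_integral (A * r) * (2 / r * (1 - sqrt (1 - r)))) {0..1}"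
    by (rule has_integral_mult_right[OF sqrt_integral[OF r]])
  have "norm (integral {0..1} (\<lambda>s. h (linepath 0 z s) * z)) \<le> integral {0..1} (\<lambda>s. (A * r) * (1 / sqrt (1 - s * r)))"
  proof (rule integral_norm_bound_integral)
    show "(\<lambda>s. h (linepath 0 z s) * z) integrable_on {0..1}" using I2 by blast
    show "(\<lambda>s. A * r * (1 / sqrt (1 - s * r))) integrable_on {0..1}" using G by blast
    fix s :: real assume s: "s \<in> {0..1}"
    have nw: "norm (linepath 0 z s) = s * r" using s by (simp add: linepath_def r_def)
    have sr: "s * r < 1"
    proof -
      have "s * r \<le> r" using s r by (intro mult_left_le_one_le) auto
      then show ?thesis using r by linarith
    qed
    have w: "linepath 0 z s \<in> ball 0 1" using nw sr by simp
    have sq: "0 < sqrt (1 - s * r)" using sr by simp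
    have "norm (h (linepath 0 z s)) * sqrt (1 - s * r) \<le> A" using A w nw by metis
    then have "norm (h (linepath 0 z s)) \<le> A / sqrt (1 - s * r)" using sq by (simp add: le_divide_eq)
    then have "norm (h (linepath 0 z s)) * r \<le> A / sqrt (1 - s * r) * r" using r by (intro mult_right_mono) auto
    then show "norm (h (linepath 0 z s) * z) \<le> A * r * (1 / sqrt (1 - s * r))"
      by (simp add: norm_mult r_def[symmetric])
  qed
  also have "\<dots> = (A * r) * (2 / r * (1 - sqrt (1 - r)))" using G by (rule integral_unique)
  also have "\<dots> = 2 * A * (1 - sqrt (1 - r))" using r by (simp add: field_simps)
  also have "\<dots> \<le> 2 * A * r"
  proof -
    have "1 - r \<le> sqrt (1 - r)"
    proof -
      have "1 - r = sqrt (1 - r) * sqrt (1 - r)" using r by simp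
      also have "\<dots> \<le> sqrt (1 - r) * 1" using r by (intro mult_left_mono) auto
      finally show ?thesis by simp
    qed
    then show ?thesis using A0 by (intro mult_left_mono) auto
  qed
  finally show ?thesis using integral_unique[OF I2] ci by (simp add: r_def)
qed

definition Bk :: "real \<Rightarrow> nat \<Rightarrow> real" where
  "Bk t k = 2 * (2 * real k + 1) ^ k / (1 - t)"

lemma cesaro_bound:
  assumes f: "f \<in> Hv k" and t: "0 \<le> t" "t < 1" and z: "z \<in> ball 0 1"
  shows "norm (Cesaro_t t f z) \<le> Bk t k * vnorm k f"
proof -
  have V0: "0 \<le> vnorm k f" by (rule vnorm_nonneg[OF f])
  define A where "A = vnorm k f * (2 * real k + 1) ^ k / (1 - t)"
  have BA: "Bk t k * vnorm k f = 2 * A" by (simp add: Bk_def A_def)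
  show ?thesis
  proof (cases "z = 0")
    case True
    have "norm (f 0) \<le> vnorm k f" using vnorm_upper[OF f, of 0] by (simp add: vw_0)
    also have "\<dots> \<le> vnorm k f * (2 * real k + 1) ^ k"
      using V0 by (simp add: mult_le_cancel_left1 one_le_power)
    also have "\<dots> \<le> vnorm k f * (2 * real k + 1) ^ k / (1 - t)"
    proof -
      have "vnorm k f * (2 * real k + 1) ^ k * (1 - t) \<le> vnorm k f * (2 * real k + 1) ^ k * 1"
        using t V0 by (intro mult_left_mono) auto
      then show ?thesis using t by (simp add: le_divide_eq)
    qed
    also have "\<dots> \<le> 2 * A"
    proof -
      have "0 \<le> vnorm k f * (2 * real k + 1) ^ k / (1 - t)" using V0 t by simp
      then show ?thesis by (simp add: A_def)
    qed
    finally show ?thesis using True BA by (simp add: Cesaro_t_def)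
  next
    case False
    define h where "h = (\<lambda>w. f w / (1 - of_real t * w))"
    have hc: "continuous_on (ball 0 1) h"
      unfolding h_def by (intro holomorphic_on_imp_continuous_on h_holo Hv_holo[OF f] t)
    have hA: "\<forall>w\<in>ball 0 1. norm (h w) * sqrt (1 - norm w) \<le> A"
    proof
      fix w :: complex assume w: "w \<in> ball 0 1"
      have "1 - t \<le> norm (1 - of_real t * w)"
      proof -
        have "t * norm w \<le> t * 1" using t w by (intro mult_left_mono) auto
        then have "norm (of_real t * w) \<le> t" using t by (simp add: norm_mult)
        then show ?thesis using norm_triangle_ineq2[of 1 "of_real t * w"] by simp
      qed
      then have "norm (h w) \<le> norm (f w) / (1 - t)"
        using t unfolding h_def by (simp add: norm_divide frac_le)
      then have "norm (h w) * sqrt (1 - norm w) \<le> norm (f w) / (1 - t) * sqrt (1 - norm w)"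
        using w by (intro mult_right_mono) auto
      also have "\<dots> = (norm (f w) * sqrt (1 - norm w)) / (1 - t)" by simp
      also have "\<dots> \<le> A"
        unfolding A_def using f_pt_bound[OF f w] t by (simp add: divide_right_mono)
      finally show "norm (h w) * sqrt (1 - norm w) \<le> A" .
    qed
    have "norm (Cesaro_t t f z) = norm (contour_integral (linepath 0 z) h) / norm z"
      using False z by (simp add: Cesaro_t_def h_def norm_divide)
    also have "\<dots> \<le> 2 * A * norm z / norm z"
      by (intro divide_right_mono segment_bound[OF hc hA z False]) simp
    also have "\<dots> = 2 * A" using False by simp
    finally show ?thesis using BA by simp
  qed
qed

lemma Bk_pos: "t < 1 \<Longrightarrow> 0 < Bk t k"
  by (simp add: Bk_def)


definition Kset :: "(complex \<Rightarrow> complex) set" where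
  "Kset = {f. f holomorphic_on ball 0 1 \<and> (\<forall>z. z \<notin> ball 0 1 \<longrightarrow> f z = 0) \<and> (\<forall>z\<in>ball 0 1. norm (f z) \<le> 1)}"

lemma K_Hv0: "Kset \<subseteq> Hv 0"
  unfolding Kset_def Hv_def by auto

lemma K_Hv1: "Kset \<subseteq> Hv 1"
  using K_Hv0 Hv_mono[of 0 1] by auto

lemma K_VH: "Kset \<subseteq> VH"
  using K_Hv0 unfolding VH_def by auto

lemma Hv_diff: "f \<in> Hv k \<Longrightarrow> g \<in> Hv k \<Longrightarrow> (\<lambda>z. f z - g z) \<in> Hv k"
  using Hv_lin[of f k g 1 "-1"] by simp

lemma K_closed: "closedin VH_top Kset"
  unfolding closedin_def topspace_VH_top openin_VH_top
proof (intro conjI K_VH)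
  show "openP (VH - Kset)" unfolding openP_def
  proof (intro conjI ballI)
    show "VH - Kset \<subseteq> VH" by auto
    fix f assume f: "f \<in> VH - Kset"
    then obtain j where fj: "f \<in> Hv j" by (auto simp: VH_def)
    have "\<not> (\<forall>z\<in>ball 0 1. norm (f z) \<le> 1)"
      using f Hv_holo[OF fj] Hv_out[OF fj] unfolding Kset_def by blast
    then obtain z0 where z0: "z0 \<in> ball 0 1" "norm (f z0) > 1"
      by (auto simp: not_le)
    define \<delta> where "\<delta> = (norm (f z0) - 1) / 2"
    have \<delta>: "\<delta> > 0" using z0 by (simp add: \<delta>_def)
    define W where "W = {g \<in> VH. norm (g z0) \<le> \<delta>}"
    have "VH_basic_nbhd W" unfolding VH_basic_nbhd_def
    proof (intro conjI allI ballI impI)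
      show "W \<subseteq> VH" by (auto simp: W_def)
    next
      fix g h a b assume g: "g \<in> W" and h: "h \<in> W" and ab: "cmod a + cmod b \<le> 1"
      have "norm (a * g z0 + b * h z0) \<le> norm a * norm (g z0) + norm b * norm (h z0)"
        using norm_triangle_ineq[of "a * g z0" "b * h z0"] by (simp add: norm_mult)
      also have "\<dots> \<le> norm a * \<delta> + norm b * \<delta>"
        using g h by (intro add_mono mult_left_mono) (auto simp: W_def)
      also have "\<dots> \<le> \<delta>"
      proof -
        have "(norm a + norm b) * \<delta> \<le> 1 * \<delta>" by (rule mult_right_mono) (use ab \<delta> in auto)
        then show ?thesis by (simp add: distrib_right)
      qed
      finally have n: "norm (a * g z0 + b * h z0) \<le> \<delta>" .
      have "g \<in> VH" "h \<in> VH" using g h by (auto simp: W_def)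
      then have "(\<lambda>z. a * g z + b * h z) \<in> VH" by (rule VH_lin)
      then show "(\<lambda>z. a * g z + b * h z) \<in> W" using n by (simp add: W_def)
    next
      fix k
      have vp: "0 < vw z0 ^ k" using vw_pos[of z0] z0 by simp
      show "\<exists>\<epsilon>>0. {f \<in> Hv k. vnorm k f < \<epsilon>} \<subseteq> W"
      proof (intro exI[of _ "\<delta> * vw z0 ^ k"] conjI subsetI)
        show "0 < \<delta> * vw z0 ^ k" using vp \<delta> by simp
        fix g assume "g \<in> {f \<in> Hv k. vnorm k f < \<delta> * vw z0 ^ k}"
        then have g: "g \<in> Hv k" "vnorm k g < \<delta> * vw z0 ^ k" by auto
        have "vw z0 ^ k * norm (g z0) < vw z0 ^ k * \<delta>"
          using vnorm_upper[OF g(1) z0(1)] g(2) by (simp add: mult.commute)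
        then have "norm (g z0) \<le> \<delta>" using vp by simp
        then show "g \<in> W" using g(1) by (auto simp: W_def VH_def)
      qed
    qed
    moreover have "(\<lambda>g z. f z + g z) ` W \<subseteq> VH - Kset"
    proof
      fix u assume "u \<in> (\<lambda>g z. f z + g z) ` W"
      then obtain g where g: "g \<in> W" "u = (\<lambda>z. f z + g z)" by auto
      have "u \<in> VH" using g f VH_add by (auto simp: W_def)
      moreover have "norm (u z0) > 1"
      proof -
        have "norm (f z0) - norm (g z0) \<le> norm (u z0)"
          using g(2) norm_triangle_ineq2[of "f z0" "- g z0"] by simp
        moreover have "norm (g z0) \<le> \<delta>" using g by (simp add: W_def)
        ultimately show ?thesis using z0 by (simp add: \<delta>_def)
      qed
      then have "u \<notin> Kset" using z0 unfolding Kset_def by force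
      ultimately show "u \<in> VH - Kset" by auto
    qed
    ultimately show "\<exists>W. VH_basic_nbhd W \<and> (\<lambda>g z. f z + g z) ` W \<subseteq> VH - Kset" by blast
  qed
qed


definition dK :: "(complex \<Rightarrow> complex) \<Rightarrow> (complex \<Rightarrow> complex) \<Rightarrow> real" where
  "dK f g = max 0 (vnorm 1 (\<lambda>z. f z - g z))"

lemma vnorm_commute: "vnorm k (\<lambda>z. f z - g z) = vnorm k (\<lambda>z. g z - f z)"
  unfolding vnorm_def by (simp add: norm_minus_commute)

lemma dK_eq: assumes "f \<in> Kset" "g \<in> Kset" shows "dK f g = vnorm 1 (\<lambda>z. f z - g z)"
proof -
  have "f \<in> Hv 1" "g \<in> Hv 1" using K_Hv1 assms by auto
  from vnorm_nonneg[OF Hv_diff[OF this]] show ?thesis unfolding dK_def by (rule max_absorb2)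
qed

lemma metric_K: "Metric_space Kset dK"
proof
  fix x y show "0 \<le> dK x y" by (simp add: dK_def)
  show "dK x y = dK y x" unfolding dK_def by (subst vnorm_commute) (rule refl)
next
  fix x y assume x: "x \<in> Kset" and y: "y \<in> Kset"
  have xy: "(\<lambda>z. x z - y z) \<in> Hv 1" using x y K_Hv1 Hv_diff by blast
  show "dK x y = 0 \<longleftrightarrow> x = y"
  proof
    assume "x = y"
    then show "dK x y = 0" by (simp add: dK_def vnorm_def)
  next
    assume d: "dK x y = 0"
    show "x = y"
    proof
      fix z
      show "x z = y z"
      proof (cases "z \<in> ball 0 1")
        case True
        have "vw z ^ 1 * norm (x z - y z) \<le> 0"
          using vnorm_upper[OF xy True] d dK_eq[OF x y] by simp
        moreover have "0 < vw z" using vw_pos[of z] True by simp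
        ultimately show ?thesis by (simp add: mult_le_0_iff)
      next
        case False
        then show ?thesis using x y by (simp add: Kset_def)
      qed
    qed
  qed
next
  fix x y z assume x: "x \<in> Kset" and y: "y \<in> Kset" and z: "z \<in> Kset"
  have xy: "(\<lambda>w. x w - y w) \<in> Hv 1" using x y K_Hv1 Hv_diff by blast
  have yz: "(\<lambda>w. y w - z w) \<in> Hv 1" using y z K_Hv1 Hv_diff by blast
  have "vnorm 1 (\<lambda>w. x w - z w) \<le> vnorm 1 (\<lambda>w. x w - y w) + vnorm 1 (\<lambda>w. y w - z w)"
    unfolding vnorm_def[of 1 "\<lambda>w. x w - z w"]
  proof (rule cSUP_least)
    show "ball (0::complex) 1 \<noteq> {}" by simp
    fix w :: complex assume w: "w \<in> ball 0 1"
    have "vw w ^ 1 * norm (x w - z w) \<le> vw w ^ 1 * norm (x w - y w) + vw w ^ 1 * norm (y w - z w)"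
    proof -
      have "norm (x w - z w) \<le> norm (x w - y w) + norm (y w - z w)"
        using norm_triangle_ineq[of "x w - y w" "y w - z w"] by simp
      then have "vw w * norm (x w - z w) \<le> vw w * (norm (x w - y w) + norm (y w - z w))"
        using vw_pos[of w] w by (intro mult_left_mono) auto
      then show ?thesis by (simp only: power_one_right distrib_left)
    qed
    also have "\<dots> \<le> vnorm 1 (\<lambda>w. x w - y w) + vnorm 1 (\<lambda>w. y w - z w)"
      using vnorm_upper[OF xy w] vnorm_upper[OF yz w] by simp
    finally show "vw w ^ 1 * norm (x w - z w) \<le> vnorm 1 (\<lambda>w. x w - y w) + vnorm 1 (\<lambda>w. y w - z w)" .
  qed
  then show "dK x z \<le> dK x y + dK y z" using dK_eq[OF x z] dK_eq[OF x y] dK_eq[OF y z] by simp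
qed


lemma vw_small:
  assumes e: "0 < e" and z: "norm z < 1" and big: "norm z > 1 - exp (- (1 + 4 / e))"
  shows "vw z \<le> e / 4"
proof -
  have "exp (- (1 + 4 / e)) \<le> exp (-1)" using e by simp
  moreover have "exp (-1) = 1 / exp (1::real)" by (simp add: exp_minus inverse_eq_divide)
  ultimately have nb: "\<not> norm z \<le> 1 - 1 / exp 1" using big by linarith
  note h = vw_big[OF z nb]
  have "1 - norm z < exp (- (1 + 4 / e))" using big by simp
  then have "ln (1 - norm z) < - (1 + 4 / e)"
    using z by (metis diff_gt_0_iff_gt ln_exp ln_less_cancel_iff exp_gt_zero)
  then have L: "- ln (1 - norm z) > 4 / e" by simp
  have "vw z = 1 / (- ln (1 - norm z))" by (rule h(1))
  also have "\<dots> \<le> 1 / (4 / e)"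
  proof (rule divide_left_mono)
    show "4 / e \<le> - ln (1 - norm z)" using L by simp
    have "0 < 4 / e" using e by simp
    moreover have "0 < - ln (1 - norm z)" using L \<open>0 < 4 / e\<close> by linarith
    ultimately show "0 < - ln (1 - norm z) * (4 / e)" by (rule mult_pos_pos[rotated])
  qed simp
  also have "\<dots> = e / 4" by simp
  finally show ?thesis .
qed

lemma K_compact: "compactin VH_top Kset"
proof -
  interpret M: Metric_space Kset dK by (rule metric_K)
  have cK: "compactin M.mtopology Kset"
    unfolding M.compactin_sequentially
  proof (intro conjI allI impI)
    show "Kset \<subseteq> Kset" by simp
    fix \<sigma> :: "nat \<Rightarrow> complex \<Rightarrow> complex" assume \<sigma>: "range \<sigma> \<subseteq> Kset"
    obtain g r where g: "g holomorphic_on ball 0 1" and r: "strict_mono (r :: nat \<Rightarrow> nat)"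
      and pt: "\<And>x. x \<in> ball 0 1 \<Longrightarrow> ((\<lambda>n. \<sigma> (r n) x) \<longlongrightarrow> g x) sequentially"
      and un: "\<And>K. \<lbrakk>compact K; K \<subseteq> ball 0 1\<rbrakk> \<Longrightarrow> uniform_limit K (\<sigma> \<circ> r) g sequentially"
    proof (rule Montel[of "ball 0 1" Kset \<sigma>])
      show "open (ball (0::complex) 1)" by simp
      show "\<And>h. h \<in> Kset \<Longrightarrow> h holomorphic_on ball 0 1" by (simp add: Kset_def)
      show "\<And>K. compact K \<Longrightarrow> K \<subseteq> ball 0 1 \<Longrightarrow> \<exists>B. \<forall>h\<in>Kset. \<forall>z\<in>K. cmod (h z) \<le> B"
        by (intro exI[of _ 1]) (auto simp: Kset_def)
      show "range \<sigma> \<subseteq> Kset" by fact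
    qed blast
    define l where "l = (\<lambda>z. if z \<in> ball 0 1 then g z else 0)"
    have \<sigma>K: "\<And>n. \<sigma> n \<in> Kset" using \<sigma> by auto
    have lg: "\<And>z. z \<in> ball 0 1 \<Longrightarrow> l z = g z" by (simp add: l_def)
    have gb: "norm (g z) \<le> 1" if z: "z \<in> ball 0 1" for z
      by (rule Lim_norm_ubound[OF _ pt[OF z]]) (use \<sigma>K z in \<open>auto simp: Kset_def\<close>)
    have lb: "norm (l z) \<le> 1" if z: "z \<in> ball 0 1" for z
      using gb[OF z] z by (simp add: l_def)
    have lK: "l \<in> Kset" unfolding Kset_def
    proof (intro CollectI conjI allI impI ballI)
      show "l holomorphic_on ball 0 1" using g by (rule holomorphic_transform) (simp add: l_def)
    qed (auto simp: l_def gb)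
    have "limitin M.mtopology (\<sigma> \<circ> r) l sequentially"
      unfolding M.limitin_metric
    proof (intro conjI allI impI lK)
      fix e :: real assume e: "0 < e"
      define \<rho> where "\<rho> = 1 - exp (- (1 + 4 / e))"
      have \<rho>1: "\<rho> < 1" by (simp add: \<rho>_def)
      have "cball 0 \<rho> \<subseteq> ball 0 1" using \<rho>1 by auto
      then have "uniform_limit (cball 0 \<rho>) (\<sigma> \<circ> r) g sequentially" by (intro un) auto
      note ul2 = this[unfolded uniform_limit_iff, rule_format, of "e / 2"]
      have e2: "0 < e / 2" using e by simp
      have ev: "\<forall>\<^sub>F n in sequentially. \<forall>z\<in>cball 0 \<rho>. dist ((\<sigma> \<circ> r) n z) (g z) < e / 2"
        by (rule ul2[OF e2])
      show "\<forall>\<^sub>F n in sequentially. (\<sigma> \<circ> r) n \<in> Kset \<and> dK ((\<sigma> \<circ> r) n) l < e"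
        using ev
      proof eventually_elim
        case (elim n)
        define u where "u = \<sigma> (r n)"
        have uK: "u \<in> Kset" using \<sigma>K by (simp add: u_def)
        have "vnorm 1 (\<lambda>z. u z - l z) \<le> e / 2"
          unfolding vnorm_def
        proof (rule cSUP_least)
          show "ball (0::complex) 1 \<noteq> {}" by simp
          fix z :: complex assume z: "z \<in> ball 0 1"
          have vp: "0 < vw z" "vw z \<le> 1" using vw_pos[of z] vw_le1[of z] z by auto
          show "vw z ^ 1 * norm (u z - l z) \<le> e / 2"
          proof (cases "norm z \<le> \<rho>")
            case True
            then have "norm (u z - l z) < e / 2"
              using elim z True by (simp add: u_def lg dist_norm)
            then have "vw z * norm (u z - l z) \<le> 1 * (e / 2)"
              using vp by (intro mult_mono) auto
            then show ?thesis by simp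
          next
            case False
            have "vw z \<le> e / 4" using vw_small[OF e] z False by (simp add: \<rho>_def)
            moreover have "norm (u z - l z) \<le> 2"
            proof -
              have "norm (u z) \<le> 1" using uK z by (simp add: Kset_def)
              moreover have "norm (l z) \<le> 1" using lb z .
              ultimately show ?thesis using norm_triangle_ineq4[of "u z" "l z"] by linarith
            qed
            ultimately have "vw z * norm (u z - l z) \<le> (e / 4) * 2"
              using vp by (intro mult_mono) auto
            then show ?thesis by simp
          qed
        qed
        then have "dK u l \<le> e / 2" using dK_eq[OF uK lK] by simp
        then show ?case using uK e by (simp add: u_def)
      qed
    qed
    then show "\<exists>l r. l \<in> Kset \<and> strict_mono r \<and> limitin M.mtopology (\<sigma> \<circ> r) l sequentially"
      using lK r by blast
  qed
  have cm: "continuous_map M.mtopology VH_top id"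
    unfolding continuous_map_def
  proof (intro conjI allI impI)
    show "id \<in> topspace M.mtopology \<rightarrow> topspace VH_top"
      using K_VH by (auto simp: topspace_VH_top)
    fix U assume "openin VH_top U"
    then have U: "openP U" by (simp add: openin_VH_top)
    show "openin M.mtopology {x \<in> topspace M.mtopology. id x \<in> U}"
      unfolding M.openin_mtopology
    proof (intro conjI allI impI)
      show "{x \<in> topspace M.mtopology. id x \<in> U} \<subseteq> Kset" by auto
      fix f assume "f \<in> {x \<in> topspace M.mtopology. id x \<in> U}"
      then have fK: "f \<in> Kset" and fU: "f \<in> U" by auto
      obtain W where W: "VH_basic_nbhd W" "(\<lambda>g z. f z + g z) ` W \<subseteq> U"
        using U fU unfolding openP_def by meson
      obtain e where e: "e > 0" "{g \<in> Hv 1. vnorm 1 g < e} \<subseteq> W"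
        using W(1) unfolding VH_basic_nbhd_def by blast
      show "\<exists>r>0. M.mball f r \<subseteq> {x \<in> topspace M.mtopology. id x \<in> U}"
      proof (intro exI[of _ e] conjI subsetI)
        show "0 < e" by fact
        fix g assume "g \<in> M.mball f e"
        then have gK: "g \<in> Kset" and d: "dK f g < e" by auto
        define w where "w = (\<lambda>z. g z - f z)"
        have "w \<in> Hv 1" unfolding w_def using gK fK K_Hv1 Hv_diff by blast
        moreover have "vnorm 1 w < e"
          using d dK_eq[OF fK gK] vnorm_commute[of 1 f g] by (simp add: w_def)
        ultimately have "w \<in> W" using e by blast
        then have "(\<lambda>g z. f z + g z) w \<in> U" by (rule subsetD[OF W(2) imageI])
        then have "(\<lambda>z. f z + w z) \<in> U" by simp
        moreover have "(\<lambda>z. f z + w z) = g" by (simp add: w_def)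
        ultimately show "g \<in> {x \<in> topspace M.mtopology. id x \<in> U}" using gK by simp
      qed
    qed
  qed
  from image_compactin[OF cK cm] show ?thesis by simp
qed


lemma VH_holo: "f \<in> VH \<Longrightarrow> f holomorphic_on ball 0 1"
  unfolding VH_def using Hv_holo by blast

lemma cesaro_Hv0:
  assumes f: "f \<in> Hv k" and t: "0 \<le> t" "t < 1"
  shows "Cesaro_t t f \<in> Hv 0"
  unfolding Hv_def
proof (intro CollectI conjI allI impI)
  show "Cesaro_t t f holomorphic_on ball 0 1" by (rule cesaro_holo[OF Hv_holo[OF f] t])
  show "\<And>z. z \<notin> ball 0 1 \<Longrightarrow> Cesaro_t t f z = 0" by (rule cesaro_out)
  show "\<exists>C. \<forall>z\<in>ball 0 1. vw z ^ 0 * cmod (Cesaro_t t f z) \<le> C"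
    using cesaro_bound[OF f t] by (intro exI[of _ "Bk t k * vnorm k f"]) simp
qed

theorem proposition3p4:
  fixes t :: real
  assumes "0 \<le> t" and "t < 1"
  shows "(\<forall>f\<in>VH. Cesaro_t t f \<in> VH) \<and> VH_compact_op (Cesaro_t t)"
proof -
  have t: "0 \<le> t" "t < 1" by fact+
  have maps: "\<And>f. f \<in> VH \<Longrightarrow> Cesaro_t t f \<in> VH"
  proof -
    fix f assume "f \<in> VH"
    then obtain k where "f \<in> Hv k" by (auto simp: VH_def)
    from cesaro_Hv0[OF this t] show "Cesaro_t t f \<in> VH" by (auto simp: VH_def)
  qed
  define U where "U = {g \<in> VH. \<forall>z\<in>ball 0 1. norm (Cesaro_t t g z) \<le> 1}"
  have basic: "VH_basic_nbhd U" unfolding VH_basic_nbhd_def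
  proof (intro conjI allI ballI impI)
    show "U \<subseteq> VH" by (auto simp: U_def)
  next
    fix f g a b assume f: "f \<in> U" and g: "g \<in> U" and ab: "cmod a + cmod b \<le> 1"
    have fV: "f \<in> VH" and gV: "g \<in> VH" using f g by (auto simp: U_def)
    have "\<forall>z\<in>ball 0 1. norm (Cesaro_t t (\<lambda>z. a * f z + b * g z) z) \<le> 1"
    proof
      fix z :: complex assume z: "z \<in> ball 0 1"
      have "Cesaro_t t (\<lambda>z. a * f z + b * g z) z = a * Cesaro_t t f z + b * Cesaro_t t g z"
        by (rule cesaro_lin[OF VH_holo[OF fV] VH_holo[OF gV] t z])
      also have "norm \<dots> \<le> norm a * norm (Cesaro_t t f z) + norm b * norm (Cesaro_t t g z)"
        using norm_triangle_ineq[of "a * Cesaro_t t f z" "b * Cesaro_t t g z"] by (simp add: norm_mult)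
      also have "\<dots> \<le> norm a * 1 + norm b * 1"
        using f g z by (intro add_mono mult_left_mono) (auto simp: U_def)
      also have "\<dots> \<le> 1" using ab by simp
      finally show "norm (Cesaro_t t (\<lambda>z. a * f z + b * g z) z) \<le> 1" .
    qed
    moreover have "(\<lambda>z. a * f z + b * g z) \<in> VH" using fV gV by (rule VH_lin)
    ultimately show "(\<lambda>z. a * f z + b * g z) \<in> U" by (simp add: U_def)
  next
    fix k
    have B: "0 < Bk t k" by (rule Bk_pos[OF t(2)])
    show "\<exists>\<epsilon>>0. {f \<in> Hv k. vnorm k f < \<epsilon>} \<subseteq> U"
    proof (intro exI[of _ "1 / Bk t k"] conjI subsetI)
      show "0 < 1 / Bk t k" using B by simp
      fix f assume "f \<in> {f \<in> Hv k. vnorm k f < 1 / Bk t k}"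
      then have f: "f \<in> Hv k" and fn: "vnorm k f < 1 / Bk t k" by auto
      have "\<forall>z\<in>ball 0 1. norm (Cesaro_t t f z) \<le> 1"
      proof
        fix z :: complex assume z: "z \<in> ball 0 1"
        have "norm (Cesaro_t t f z) \<le> Bk t k * vnorm k f" by (rule cesaro_bound[OF f t z])
        also have "\<dots> \<le> Bk t k * (1 / Bk t k)" using fn B by (intro mult_left_mono) auto
        also have "\<dots> = 1" using B by simp
        finally show "norm (Cesaro_t t f z) \<le> 1" .
      qed
      moreover have "f \<in> VH" using f by (auto simp: VH_def)
      ultimately show "f \<in> U" by (simp add: U_def)
    qed
  qed
  have zn: "VH_zero_nbhd U" unfolding VH_zero_nbhd_def using basic by (auto simp: U_def)
  have img: "Cesaro_t t ` U \<subseteq> Kset"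
  proof
    fix u assume "u \<in> Cesaro_t t ` U"
    then obtain f where f: "f \<in> U" "u = Cesaro_t t f" by auto
    have fV: "f \<in> VH" using f by (simp add: U_def)
    show "u \<in> Kset" unfolding Kset_def
      using f cesaro_holo[OF VH_holo[OF fV] t] cesaro_out[of _ t f] by (auto simp: U_def)
  qed
  have "VH_top closure_of (Cesaro_t t ` U) \<subseteq> Kset"
    by (rule closure_of_minimal[OF img K_closed])
  then have "compactin VH_top (VH_top closure_of (Cesaro_t t ` U))"
    by (rule closed_compactin[OF K_compact _ closedin_closure_of])
  moreover have "Cesaro_t t ` U \<subseteq> VH" using img K_VH by auto
  ultimately have "VH_compact_op (Cesaro_t t)"
    unfolding VH_compact_op_def using zn by blast
  then show ?thesis using maps by blast
qed


end
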